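(* Let $\gamma:[0,1]\to\mathbb{R}^2$ be a $C^1$ curve with constant speed $c>0$ with $\gamma(0)=(0,0)$ and $\gamma'(0)=(c,0)$, and let $\theta$ be a turning angle function for $\gamma$ with $\theta(0)\in 2\pi\mathbb{Z}$. If $|\theta(1)-\theta(0)|\ge 2\pi$ and \[\|\gamma(1)\|\ge\sqrt{2\big(1-\cos\theta(1)\big)}\,\max_{s\in[0,1]}\|\gamma(s)\|,\] then there exist cuts $0\le c_1\le c_2\le 1$ such that $r_{(c_1,c_2)}(0)=r_{(c_1,c_2)}(1)$ (the rearranged curve is closed, not necessarily smooth at the end point).
   Context: A turning angle function for $\gamma$ is a continuous function $\theta$ with $\gamma'(s)=c(\cos\theta(s),\sin\theta(s))$. Concatenation: if $\alpha$ on $[a_1,b_1]$ and $\beta$ on $[a_2,b_2]$ are $C^1$ planar curves with the same constant speed, $\alpha*\beta$ is the curve on $[0,(b_1-a_1)+(b_2-a_2)]$ that equals $\alpha(s+a_1)$ for $s\le b_1-a_1$ and equals $T(\beta(s-(b_1-a_1)+a_2))$ afterwards, where $T$ is the orientation-preserving rigid motion of $\mathbb{R}^2$ sending $\beta(a_2)$ to $\alpha(b_1)$ and the unit tangent $\beta'(a_2)/c$ to $\alpha'(b_1)/c$. For cuts $0\le c_1\le c_2\le 1$, let $\gamma_1,\gamma_2,\gamma_3$ be the restrictions of $\gamma$ to $[0,c_1]$, $[c_1,c_2]$, $[c_2,1]$ (an arc of length zero is a point carrying the tangent direction of $\gamma$ there). The rearranged curve is $r_{(c_1,c_2)}:=\gamma_1*\gamma_3*\gamma_2:[0,1]\to\mathbb{R}^2$.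 Throughout this setting the paper normalizes $\gamma(0)=(0,0)$ and the initial tangent along the positive $x$-axis. *)

theory Defs
  imports "HOL-Analysis.Analysis"
begin

text \<open>The plane R^2 is modelled as the complex numbers. A curve piece is a tuple
  (curve, its derivative function, a, b) describing the restriction to [a,b].\<close>

type_synonym arc = "(real \<Rightarrow> complex) \<times> (real \<Rightarrow> complex) \<times> real \<times> real"

text \<open>Orientation preserving rigid motion sending point q to p and unit tangent v to
  unit tangent u (u, v given as velocity vectors of equal speed, so u / v is unit).\<close>
definition rigid_motion :: "complex \<Rightarrow> complex \<Rightarrow> complex \<Rightarrow> complex \<Rightarrow> complex \<Rightarrow> complex" where
  "rigid_motion p u q v z = p + (u / v) * (z - q)"

definition concat_arc :: "arc \<Rightarrow> arc \<Rightarrow> arc" where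
  "concat_arc A B = (case A of (\<alpha>, \<alpha>', a1, b1) \<Rightarrow> case B of (\<beta>, \<beta>', a2, b2) \<Rightarrow>
     ((\<lambda>s. if s \<le> b1 - a1 then \<alpha> (s + a1)
           else rigid_motion (\<alpha> b1) (\<alpha>' b1) (\<beta> a2) (\<beta>' a2) (\<beta> (s - (b1 - a1) + a2))),
      (\<lambda>s. if s \<le> b1 - a1 then \<alpha>' (s + a1)
           else (\<alpha>' b1 / \<beta>' a2) * \<beta>' (s - (b1 - a1) + a2)),
      0, (b1 - a1) + (b2 - a2)))"

definition rearranged :: "(real \<Rightarrow> complex) \<Rightarrow> (real \<Rightarrow> complex) \<Rightarrow> real \<Rightarrow> real \<Rightarrow> real \<Rightarrow> complex" where
  "rearranged \<gamma> \<gamma>' c1 c2 =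
     fst (concat_arc (concat_arc (\<gamma>, \<gamma>', 0, c1) (\<gamma>, \<gamma>', c2, 1)) (\<gamma>, \<gamma>', c1, c2))"

definition turning_angle :: "(real \<Rightarrow> complex) \<Rightarrow> real \<Rightarrow> (real \<Rightarrow> real) \<Rightarrow> bool" where
  "turning_angle \<gamma>' c \<theta> \<longleftrightarrow> continuous_on {0..1} \<theta> \<and>
     (\<forall>s\<in>{0..1}. \<gamma>' s = complex_of_real c * cis (\<theta> s))"

end

theory Submission
  imports Defs
begin

lemma rearr0: assumes "0 \<le> c1" "c1 \<le> c2" "c2 \<le> 1"
  shows "rearranged g g' c1 c2 0 = g 0"
  using assms by (simp add: rearranged_def concat_arc_def)

lemma rearr1: assumes "0 \<le> c1" "c1 \<le> c2" "c2 \<le> 1" "g' c1 \<noteq> 0" "g' c2 \<noteq> 0"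
  shows "rearranged g g' c1 c2 1 = g c1 + (g' c1 / g' c2) * (g 1 - g c2) + (g' 1 / g' c2) * (g c2 - g c1)"
  using assms by (auto simp add: rearranged_def concat_arc_def rigid_motion_def field_simps)

lemma exp_const_imp_const:
  fixes h :: "'a::topological_space \<Rightarrow> complex"
  assumes "connected S" "continuous_on S h" "\<And>x. x \<in> S \<Longrightarrow> exp (h x) = K" "x \<in> S" "y \<in> S"
  shows "h x = h y"
proof -
  have "h constant_on S"
  proof (rule continuous_discrete_range_constant[OF assms(1,2)])
    fix x assume x: "x \<in> S"
    show "\<exists>e>0. \<forall>y. y \<in> S \<and> h y \<noteq> h x \<longrightarrow> e \<le> norm (h y - h x)"
    proof (intro exI[of _ "2*pi"] conjI allI impI)
      fix y assume y: "y \<in> S \<and> h y \<noteq> h x"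
      have "K \<noteq> 0" using assms(3)[OF x] exp_not_eq_zero by metis
      have "exp (h y - h x) = 1" using y x assms(3) \<open>K \<noteq> 0\<close> by (simp add: exp_diff)
      then obtain n::int where n: "Re (h y - h x) = 0" "Im (h y - h x) = of_int (2*n) * pi"
        by (auto simp: exp_eq_1)
      have "n \<noteq> 0"
      proof
        assume "n = 0"
        then have "h y - h x = 0" using n by (simp add: complex_eq_iff)
        then show False using y by simp
      qed
      then have "1 \<le> \<bar>real_of_int n\<bar>" by linarith
      have "norm (h y - h x) = \<bar>Im (h y - h x)\<bar>" using n by (simp add: cmod_def)
      also have "\<dots> = 2*pi*\<bar>real_of_int n\<bar>" using n by (simp add: abs_mult)
      also have "\<dots> \<ge> 2*pi" using \<open>1 \<le> \<bar>real_of_int n\<bar>\<close> by simp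
      finally show "2*pi \<le> norm (h y - h x)" .
    qed simp
  qed
  then show ?thesis using assms(4,5) by (auto simp: constant_on_def)
qed

lemma convT: "convex {p::real\<times>real. 0 \<le> fst p \<and> fst p \<le> snd p \<and> snd p \<le> 1}"
  unfolding convex_def
proof (clarify)
  fix a b a2 b2 u v :: real
  assume *: "0 \<le> fst (a,b)" "fst (a,b) \<le> snd (a,b)" "snd (a,b) \<le> 1" "0 \<le> fst (a2,b2)" "fst (a2,b2) \<le> snd (a2,b2)" "snd (a2,b2) \<le> 1" "0 \<le> u" "0 \<le> v" "u + v = 1"
  have "u * a \<le> u * b" using * by (simp add: mult_left_mono)
  moreover have "v * a2 \<le> v * b2" using * by (simp add: mult_left_mono)
  moreover have "u * b \<le> u" using * by (simp add: mult_left_le)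
  moreover have "v * b2 \<le> v" using * by (simp add: mult_left_le)
  ultimately show "0 \<le> fst (u *\<^sub>R (a, b) + v *\<^sub>R (a2, b2)) \<and>
       fst (u *\<^sub>R (a, b) + v *\<^sub>R (a2, b2)) \<le> snd (u *\<^sub>R (a, b) + v *\<^sub>R (a2, b2)) \<and>
       snd (u *\<^sub>R (a, b) + v *\<^sub>R (a2, b2)) \<le> 1" using * by auto
qed

theorem lemma3p2:
  fixes \<gamma> \<gamma>' :: "real \<Rightarrow> complex" and \<theta> :: "real \<Rightarrow> real" and c :: real
  assumes deriv: "\<And>t. t \<in> {0..1} \<Longrightarrow> (\<gamma> has_vector_derivative \<gamma>' t) (at t within {0..1})"
    and C1: "continuous_on {0..1} \<gamma>'"
    and speed: "\<And>t. t \<in> {0..1} \<Longrightarrow> norm (\<gamma>' t) = c"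
    and cpos: "c > 0"
    and start: "\<gamma> 0 = 0"
    and tan0: "\<gamma>' 0 = complex_of_real c"
    and ta: "turning_angle \<gamma>' c \<theta>"
    and th0: "\<exists>k::int. \<theta> 0 = 2 * pi * of_int k"
    and turn: "\<bar>\<theta> 1 - \<theta> 0\<bar> \<ge> 2 * pi"
    and ineq: "norm (\<gamma> 1) \<ge> sqrt (2 * (1 - cos (\<theta> 1))) * (SUP s\<in>{0..1}. norm (\<gamma> s))"
  shows "\<exists>c1 c2. 0 \<le> c1 \<and> c1 \<le> c2 \<and> c2 \<le> 1 \<and>
           rearranged \<gamma> \<gamma>' c1 c2 0 = rearranged \<gamma> \<gamma>' c1 c2 1"
proof (rule ccontr)
  assume nex: "\<not> ?thesis"
  have gcont: "continuous_on {0..1} \<gamma>"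
    using deriv has_vector_derivative_continuous continuous_on_eq_continuous_within by blast
  have nz: "\<gamma>' t \<noteq> 0" if "t \<in> {0..1}" for t
    using speed[OF that] cpos by auto
  have thc: "continuous_on {0..1} \<theta>" and cisth: "\<And>s. s \<in> {0..1} \<Longrightarrow> \<gamma>' s = complex_of_real c * cis (\<theta> s)"
    using ta by (auto simp: turning_angle_def)
  define T where "T = {p::real\<times>real. 0 \<le> fst p \<and> fst p \<le> snd p \<and> snd p \<le> 1}"
  define G where "G p = \<gamma> (fst p) + (\<gamma>' (fst p) / \<gamma>' (snd p)) * (\<gamma> 1 - \<gamma> (snd p))
      + (\<gamma>' 1 / \<gamma>' (snd p)) * (\<gamma> (snd p) - \<gamma> (fst p))" for p
  have fstT: "fst ` T \<subseteq> {0..1}" and sndT: "snd ` T \<subseteq> {0..1}" by (auto simp: T_def)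
  have Gnz: "G p \<noteq> 0" if "p \<in> T" for p
  proof
    assume "G p = 0"
    moreover obtain a b where p: "p = (a,b)" by force
    ultimately have "rearranged \<gamma> \<gamma>' a b 0 = rearranged \<gamma> \<gamma>' a b 1"
      using that nz rearr0[of a b \<gamma> \<gamma>'] rearr1[of a b \<gamma>'] start by (auto simp: T_def G_def)
    then show False using nex that p by (auto simp: T_def)
  qed
  have Gdiag: "G (t,t) = \<gamma> 1" if "t \<in> {0..1}" for t
    using nz[OF that] by (simp add: G_def)
  have Gtop: "G (t,1) = \<gamma> 1" if "t \<in> {0..1}" for t
    using nz by (simp add: G_def)
  have g1nz: "\<gamma> 1 \<noteq> 0" using Gnz[of "(0,0)"] Gdiag[of 0] by (simp add: T_def)
  have Gcont: "continuous_on T G"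
    unfolding G_def
    apply (intro continuous_intros continuous_on_compose2[OF gcont] continuous_on_compose2[OF C1])
    using fstT sndT nz by (auto simp: T_def)
  have "contractible T" unfolding T_def by (intro convex_imp_contractible convT)
  then obtain g where gc: "continuous_on T g" and gG: "\<And>p. p \<in> T \<Longrightarrow> G p = exp (g p)"
    using continuous_logarithm_on_contractible[OF Gcont] Gnz by blast
  have diag: "g (0,0) = g (1,1)"
  proof -
    have "continuous_on {0..1} (\<lambda>t. g (t, t))"
      by (rule continuous_on_compose2[OF gc]) (auto intro!: continuous_intros simp: T_def)
    moreover have "\<And>x. x \<in> {0..1} \<Longrightarrow> exp (g (x, x)) = \<gamma> 1"
      using gG Gdiag by (simp add: T_def)
    ultimately show ?thesis using exp_const_imp_const[of "{0..1}" "\<lambda>t. g (t,t)" "\<gamma> 1" 0 1] by simp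
  qed
  have top: "g (0,1) = g (1,1)"
  proof -
    have "continuous_on {0..1} (\<lambda>t. g (t, 1))"
      by (rule continuous_on_compose2[OF gc]) (auto intro!: continuous_intros simp: T_def)
    moreover have "\<And>x. x \<in> {0..1} \<Longrightarrow> exp (g (x, 1)) = \<gamma> 1"
      using gG Gtop by (simp add: T_def)
    ultimately show ?thesis using exp_const_imp_const[of "{0..1}" "\<lambda>t. g (t,1)" "\<gamma> 1" 0 1] by simp
  qed
  define w where "w = cis (\<theta> 1)"
  define M where "M = (SUP s\<in>{0..1}. norm (\<gamma> s))"
  have bdd: "bdd_above ((\<lambda>s. norm (\<gamma> s)) ` {0..1})"
    by (intro bounded_imp_bdd_above compact_imp_bounded compact_continuous_image continuous_intros gcont) simp
  have leM: "norm (\<gamma> s) \<le> M" if "s \<in> {0..1}" for s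
    unfolding M_def using bdd that by (rule cSUP_upper2) simp
  have w1: "norm (w - 1) = sqrt (2 * (1 - cos (\<theta> 1)))"
  proof -
    have "(norm (w - 1))^2 = (cos (\<theta> 1) - 1)^2 + (sin (\<theta> 1))^2"
      by (simp add: w_def cmod_power2)
    also have "\<dots> = 2 * (1 - cos (\<theta> 1))"
      using sin_cos_squared_add[of "\<theta> 1"] by (simp add: power2_eq_square algebra_simps)
    finally show ?thesis by (metis norm_ge_zero real_sqrt_abs abs_of_nonneg)
  qed
  define H where "H s = (\<gamma> 1 + (w - 1) * \<gamma> s) / \<gamma> 1" for s
  have Hle: "norm (H s - 1) \<le> 1" if "s \<in> {0..1}" for s
  proof -
    have "H s - 1 = (w - 1) * \<gamma> s / \<gamma> 1" using g1nz by (simp add: H_def field_simps)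
    then have "norm (H s - 1) = norm (w - 1) * norm (\<gamma> s) / norm (\<gamma> 1)"
      by (simp add: norm_mult norm_divide)
    also have "\<dots> \<le> norm (w - 1) * M / norm (\<gamma> 1)"
      using leM[OF that] by (intro divide_right_mono mult_left_mono) auto
    also have "\<dots> \<le> 1" using ineq g1nz w1 by (simp add: M_def)
    finally show ?thesis .
  qed
  have GH: "G (0,s) = (c / \<gamma>' s) * \<gamma> 1 * H s" if "s \<in> {0..1}" for s
    using nz[OF that] g1nz start tan0 cisth[of 1]
    by (simp add: G_def H_def w_def field_simps)
  have Hnz: "H s \<noteq> 0" if "s \<in> {0..1}" for s
    using Gnz[of "(0,s)"] GH[OF that] that by (auto simp: T_def)
  have Hnp: "H s \<notin> \<real>\<^sub>\<le>\<^sub>0" if "s \<in> {0..1}" for s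
  proof
    assume "H s \<in> \<real>\<^sub>\<le>\<^sub>0"
    then have r: "Re (H s) \<le> 0" "Im (H s) = 0" by (auto simp: complex_nonpos_Reals_iff)
    have "norm (H s - 1) = \<bar>Re (H s) - 1\<bar>" using r by (simp add: cmod_def)
    then have "Re (H s) = 0" using Hle[OF that] r by simp
    then show False using r Hnz[OF that] by (simp add: complex_eq_iff)
  qed
  define h where "h s = g (0,s) + \<i> * complex_of_real (\<theta> s) - Ln (H s)" for s
  have hc: "continuous_on {0..1} h"
    unfolding h_def H_def
    apply (intro continuous_intros continuous_on_compose2[OF gc] continuous_on_compose2[OF thc] continuous_on_compose2[OF gcont])
    using Hnp g1nz by (auto simp: T_def H_def)
  have hexp: "exp (h s) = \<gamma> 1" if "s \<in> {0..1}" for s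
  proof -
    have "exp (h s) = exp (g (0,s)) * cis (\<theta> s) / H s"
      by (simp add: h_def exp_diff exp_add cis_conv_exp Hnz[OF that] mult.commute)
    also have "\<dots> = G (0,s) * cis (\<theta> s) / H s" using gG[of "(0,s)"] that by (simp add: T_def)
    also have "\<dots> = \<gamma> 1"
      using GH[OF that] cisth[OF that] nz[OF that] Hnz[OF that] cpos by (simp add: field_simps)
    finally show ?thesis .
  qed
  have "h 0 = h 1" by (rule exp_const_imp_const[OF _ hc hexp]) auto
  moreover have "H 0 = 1" using g1nz start by (simp add: H_def)
  moreover have "H 1 = w" using g1nz by (simp add: H_def field_simps)
  ultimately have "g (0,0) + \<i> * complex_of_real (\<theta> 0) = g (0,1) + \<i> * complex_of_real (\<theta> 1) - Ln w"
    by (simp add: h_def)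
  then have "Ln w = \<i> * complex_of_real (\<theta> 1 - \<theta> 0)" using diag top by (simp add: algebra_simps)
  then have "Im (Ln w) = \<theta> 1 - \<theta> 0" by simp
  moreover have "w \<noteq> 0" by (simp add: w_def)
  ultimately have "\<bar>\<theta> 1 - \<theta> 0\<bar> \<le> pi"
    using mpi_less_Im_Ln[of w] Im_Ln_le_pi[of w] by auto
  then show False using turn pi_gt_zero by linarith
qed

end
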